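(* Let $\boldsymbol Y$ be a multivariate Pareto distribution that is an extremal graphical model with respect to a tree $T=(V,E)$, and suppose the extremal variogram $\Gamma^{(m)}$ exists for all $m\in V$. Then for every $m\in V$ and all $i,j\in V$, $$\Gamma^{(m)}_{ij}=\sum_{(s,t)\in\mathrm{ph}(ij)}\Gamma^{(m)}_{st},$$ where $\mathrm{ph}(ij)$ is the set of edges on the unique path between $i$ and $j$ in $T$; that is, $\Gamma^{(m)}$ is an additive tree metric on $T$.
   Context: $V=\{1,\dots,d\}$, $\mathcal L=\{\boldsymbol x\in[0,\infty)^d:\|\boldsymbol x\|_\infty>1\}$. A multivariate Pareto distribution is a random vector $\boldsymbol Y$ on $\mathcal L$ with $\mathbb P(Y_i>1)>0$ for all $i$ and $\mathbb P(\boldsymbol Y\in tA)=t^{-1}\mathbb P(\boldsymbol Y\in A)$ for $t\ge1$, Borel $A\subset\mathcal L$. $\boldsymbol Y^m$ denotes $\boldsymbol Y$ conditioned on $\{Y_m>1\}$. For disjoint $A,B,C\subset V$, $\boldsymbol Y_A\perp_e\boldsymbol Y_C\mid\boldsymbol Y_B$ means $\boldsymbol Y^m_A\perp\!\!\!\perp\boldsymbol Y^m_C\mid\boldsymbol Y^m_B$ for all $m\in V$; $\boldsymbol Y$ is an extremal graphical model on $T$ if $\boldsymbol Y_A\perp_e\boldsymbol Y_C\mid\boldsymbol Y_B$ whenever $B$ separates $A$ from $C$ in $T$. The extremal variogram rooted at $m$ is $\Gamma^{(m)}_{ij}=\operatorname{Var}\{\log Y^m_i-\log Y^m_j\}$,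 and it exists if all these are in $[0,\infty)$. *)

theory Defs
  imports "HOL-Probability.Probability"
begin

(* Index set V = {1..d} is modelled by a finite type 'd (V = UNIV); vectors in
   [0,\<infinity>)^d live in real^'d.  A random vector is represented by its law, a
   Borel probability measure on real^'d. *)

definition L_set :: "(real^'d::finite) set" where
  "L_set = {x. (\<forall>i. 0 \<le> x$i) \<and> (\<exists>i. 1 < x$i)}"

definition multivariate_pareto :: "(real^'d::finite) measure \<Rightarrow> bool" where
  "multivariate_pareto P \<longleftrightarrow>
     prob_space P \<and> sets P = sets borel \<and> emeasure P L_set = 1 \<and>
     (\<forall>i. measure P {x. 1 < x$i} > 0) \<and>
     (\<forall>t::real. \<forall>A \<in> sets borel. t \<ge> 1 \<and> A \<subseteq> L_set \<longrightarrow>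
        measure P ((\<lambda>x. t *\<^sub>R x) ` A) = measure P A / t)"

(* law of Y^m = Y conditioned on {Y_m > 1} *)
definition cond_law :: "(real^'d::finite) measure \<Rightarrow> 'd \<Rightarrow> (real^'d) measure" where
  "cond_law P m = uniform_measure P {x. 1 < x$m}"

definition coord_sigma :: "'d set \<Rightarrow> (real^'d::finite) measure" where
  "coord_sigma A = sigma UNIV {{x. x$i \<in> S} | i S. i \<in> A \<and> S \<in> sets borel}"

definition cond_indep :: "(real^'d::finite) measure \<Rightarrow> 'd set \<Rightarrow> 'd set \<Rightarrow> 'd set \<Rightarrow> bool" where
  "cond_indep Q A B C \<longleftrightarrow>
     (\<forall>X \<in> sets (coord_sigma A). \<forall>Z \<in> sets (coord_sigma C).
        AE x in Q. real_cond_exp Q (coord_sigma B) (indicator (X \<inter> Z)) x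
          = real_cond_exp Q (coord_sigma B) (indicator X) x
            * real_cond_exp Q (coord_sigma B) (indicator Z) x)"

definition extremal_cond_indep :: "(real^'d::finite) measure \<Rightarrow> 'd set \<Rightarrow> 'd set \<Rightarrow> 'd set \<Rightarrow> bool" where
  "extremal_cond_indep P A B C \<longleftrightarrow> (\<forall>m. cond_indep (cond_law P m) A B C)"

(* undirected simple graphs on the vertex type: symmetric irreflexive edge relation *)
definition is_path :: "('d \<times> 'd) set \<Rightarrow> 'd list \<Rightarrow> bool" where
  "is_path E xs \<longleftrightarrow> xs \<noteq> [] \<and> distinct xs \<and>
     (\<forall>k. Suc k < length xs \<longrightarrow> (xs!k, xs!Suc k) \<in> E)"

definition is_cycle :: "('d \<times> 'd) set \<Rightarrow> 'd list \<Rightarrow> bool" where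
  "is_cycle E xs \<longleftrightarrow> is_path E xs \<and> 3 \<le> length xs \<and> (last xs, hd xs) \<in> E"

definition is_tree :: "('d \<times> 'd) set \<Rightarrow> bool" where
  "is_tree E \<longleftrightarrow> sym E \<and> irrefl E \<and>
     (\<forall>i j. \<exists>xs. is_path E xs \<and> hd xs = i \<and> last xs = j) \<and>
     (\<nexists>xs. is_cycle E xs)"

definition path_edges :: "'d list \<Rightarrow> ('d \<times> 'd) set" where
  "path_edges xs = {(xs!k, xs!Suc k) | k. Suc k < length xs}"

(* ph(ij): edges (oriented from i to j) on the unique path between i and j *)
definition ph :: "('d \<times> 'd) set \<Rightarrow> 'd \<Rightarrow> 'd \<Rightarrow> ('d \<times> 'd) set" where
  "ph E i j = path_edges (THE xs. is_path E xs \<and> hd xs = i \<and> last xs = j)"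

definition separates :: "('d \<times> 'd) set \<Rightarrow> 'd set \<Rightarrow> 'd set \<Rightarrow> 'd set \<Rightarrow> bool" where
  "separates E A B C \<longleftrightarrow> (\<forall>a\<in>A. \<forall>c\<in>C. \<forall>xs. is_path E xs \<and> hd xs = a \<and> last xs = c
        \<longrightarrow> set xs \<inter> B \<noteq> {})"

definition extremal_graphical :: "(real^'d::finite) measure \<Rightarrow> ('d \<times> 'd) set \<Rightarrow> bool" where
  "extremal_graphical P E \<longleftrightarrow>
     (\<forall>A B C. A \<inter> B = {} \<and> A \<inter> C = {} \<and> B \<inter> C = {} \<and> separates E A B C
        \<longrightarrow> extremal_cond_indep P A B C)"

definition variogram :: "(real^'d::finite) measure \<Rightarrow> 'd \<Rightarrow> 'd \<Rightarrow> 'd \<Rightarrow> real" where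
  "variogram P m i j =
     prob_space.variance (cond_law P m) (\<lambda>x. ln (x$i) - ln (x$j))"

(* existence: log Y^m_i well defined (Y^m_i > 0 a.s.) and finite variance *)
definition variogram_exists :: "(real^'d::finite) measure \<Rightarrow> bool" where
  "variogram_exists P \<longleftrightarrow>
     (\<forall>m i. AE x in cond_law P m. 0 < x$i) \<and>
     (\<forall>m i j. integrable (cond_law P m) (\<lambda>x. (ln (x$i) - ln (x$j))\<^sup>2))"

end

theory Submission
  imports Defs
begin

lemma cs_space[simp]: "space (coord_sigma S) = UNIV"
  unfolding coord_sigma_def by simp

lemma cs_sets: "sets (coord_sigma S) = sigma_sets UNIV {{x. x$i \<in> T} | i T. i \<in> S \<and> T \<in> sets borel}"
  unfolding coord_sigma_def by (rule sets_measure_of) simp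

lemma cs_gen: "i \<in> S \<Longrightarrow> T \<in> sets borel \<Longrightarrow> {x. x$i \<in> T} \<in> sets (coord_sigma S)"
  unfolding cs_sets by (rule sigma_sets.Basic) blast

lemma meas_nth: "(\<lambda>x::real^'d::finite. x$i) \<in> borel_measurable borel"
  by (intro borel_measurable_continuous_onI continuous_on_component continuous_on_id)

lemma borel_nth: "(T::real set) \<in> sets borel \<Longrightarrow> {x::real^'d::finite. x$i \<in> T} \<in> sets borel"
  using measurable_sets[OF meas_nth, of T i] by (simp add: vimage_def)

lemma cs_sub_borel: "sets (coord_sigma S) \<subseteq> sets (borel :: (real^'d::finite) measure)"
proof -
  have "{{x. x$i \<in> T} | i T. i \<in> S \<and> T \<in> sets borel} \<subseteq> sets (borel :: (real^'d::finite) measure)"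
  proof
    fix A assume "A \<in> {{x::real^'d. x$i \<in> T} | i T. i \<in> S \<and> T \<in> sets borel}"
    then obtain i T where "A = {x. x$i \<in> T}" "(T::real set) \<in> sets borel" by blast
    then show "A \<in> sets borel" by (simp add: borel_nth)
  qed
  from sets.sigma_sets_subset[OF this] show ?thesis unfolding cs_sets by simp
qed

lemma cs_mono: "S \<subseteq> S' \<Longrightarrow> sets (coord_sigma S) \<subseteq> sets (coord_sigma S')"
  unfolding cs_sets by (rule sigma_sets_mono') auto

lemma cs_meas_coord: "i \<in> S \<Longrightarrow> (\<lambda>x. x$i) \<in> borel_measurable (coord_sigma S)"
  by (rule measurableI) (auto simp: vimage_def intro!: cs_gen)

lemma cs_one: "K \<in> sets (coord_sigma {k}) \<Longrightarrow> \<exists>T \<in> sets borel. K = {x. x$k \<in> T}"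
  unfolding cs_sets
proof (induction rule: sigma_sets.induct)
  case (Basic a) then show ?case by auto
next
  case Empty then show ?case by (intro bexI[of _ "{}"]) auto
next
  case (Compl a)
  then obtain T where "T \<in> sets borel" "a = {x. x$k \<in> T}" by auto
  then show ?case by (intro bexI[of _ "- T"]) auto
next
  case (Union a)
  then obtain T where "\<And>i. T i \<in> sets borel \<and> a i = {x. x$k \<in> T i}" by metis
  then show ?case by (intro bexI[of _ "\<Union>i. T i"]) auto
qed

definition prodfam :: "'d set \<Rightarrow> 'd set \<Rightarrow> (real^'d::finite) set set" where
  "prodfam S1 S2 = {X \<inter> Z | X Z. X \<in> sets (coord_sigma S1) \<and> Z \<in> sets (coord_sigma S2)}"

lemma prodfam_Int_stable: "Int_stable (prodfam S1 S2)"
  unfolding Int_stable_def prodfam_def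
proof safe
  fix X Z X' Z' assume "X \<in> sets (coord_sigma S1)" "Z \<in> sets (coord_sigma S2)"
    "X' \<in> sets (coord_sigma S1)" "Z' \<in> sets (coord_sigma S2)"
  then show "\<exists>X'' Z''. X \<inter> Z \<inter> (X' \<inter> Z') = X'' \<inter> Z'' \<and> X'' \<in> sets (coord_sigma S1) \<and> Z'' \<in> sets (coord_sigma S2)"
    by (intro exI[of _ "X \<inter> X'"] exI[of _ "Z \<inter> Z'"]) auto
qed

lemma cs_union: "sets (coord_sigma (S1 \<union> S2)) = sigma_sets UNIV (prodfam S1 S2)"
proof
  have gen: "{{x::real^'a. x$i \<in> T} | i T. i \<in> S1 \<union> S2 \<and> T \<in> sets borel} \<subseteq> sigma_sets UNIV (prodfam S1 S2)"
  proof
    fix A assume "A \<in> {{x::real^'a. x$i \<in> T} | i T. i \<in> S1 \<union> S2 \<and> T \<in> sets borel}"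
    then obtain i T where A: "A = {x. x$i \<in> T}" "i \<in> S1 \<union> S2" "(T::real set) \<in> sets borel" by blast
    have U1: "UNIV \<in> sets (coord_sigma S1)" using sets.top[of "coord_sigma S1"] by simp
    have U2: "UNIV \<in> sets (coord_sigma S2)" using sets.top[of "coord_sigma S2"] by simp
    have "A \<in> prodfam S1 S2"
    proof (cases "i \<in> S1")
      case True
      then have "A \<in> sets (coord_sigma S1)" using A cs_gen by simp
      then show ?thesis unfolding prodfam_def using U2 by (intro CollectI exI[of _ A] exI[of _ UNIV]) simp
    next
      case False
      then have "A \<in> sets (coord_sigma S2)" using A cs_gen by simp
      then show ?thesis unfolding prodfam_def using U1 by (intro CollectI exI[of _ UNIV] exI[of _ A]) simp
    qed
    then show "A \<in> sigma_sets UNIV (prodfam S1 S2)" by (rule sigma_sets.Basic)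
  qed
  show "sets (coord_sigma (S1 \<union> S2)) \<subseteq> sigma_sets UNIV (prodfam S1 S2)"
    unfolding cs_sets[of "S1 \<union> S2"] by (rule sigma_sets_mono[OF gen])
next
  have "prodfam S1 S2 \<subseteq> sets (coord_sigma (S1 \<union> S2))"
  proof
    fix A assume "A \<in> prodfam S1 S2"
    then obtain X Z where "A = X \<inter> Z" "X \<in> sets (coord_sigma S1)" "Z \<in> sets (coord_sigma S2)"
      unfolding prodfam_def by blast
    moreover have "X \<in> sets (coord_sigma (S1 \<union> S2))" using cs_mono[of S1 "S1 \<union> S2"] calculation by blast
    moreover have "Z \<in> sets (coord_sigma (S1 \<union> S2))" using cs_mono[of S2 "S1 \<union> S2"] calculation by blast
    ultimately show "A \<in> sets (coord_sigma (S1 \<union> S2))" by simp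
  qed
  from sets.sigma_sets_subset[OF this] show "sigma_sets UNIV (prodfam S1 S2) \<subseteq> sets (coord_sigma (S1 \<union> S2))"
    by simp
qed

lemma cs_scale: 
  fixes t :: real
  assumes "t > 0" "G \<in> sets (coord_sigma S)"
  shows "{x::real^'d::finite. t *\<^sub>R x \<in> G} \<in> sets (coord_sigma S)"
  using assms(2) unfolding cs_sets
proof (induction rule: sigma_sets.induct)
  case (Basic a)
  then obtain i T where iT: "a = {x. x$i \<in> T}" "i \<in> S" "T \<in> sets borel" by auto
  have m: "(\<lambda>y::real. t * y) \<in> borel_measurable borel" by simp
  have "(\<lambda>y::real. t * y) -` T \<inter> space borel \<in> sets borel" by (rule measurable_sets[OF m iT(3)])
  then have "(\<lambda>y::real. t * y) -` T \<in> sets borel" by simp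
  then have "{x::real^'d. x$i \<in> (\<lambda>y. t * y) -` T} \<in> {{x. x$i \<in> T} | i T. i \<in> S \<and> T \<in> sets borel}"
    apply (intro CollectI exI[of _ i] exI[of _ "(\<lambda>y. t * y) -` T"]) using iT(2) by simp
  then have "{x::real^'d. x$i \<in> (\<lambda>y. t * y) -` T} \<in> sigma_sets UNIV {{x. x$i \<in> T} | i T. i \<in> S \<and> T \<in> sets borel}"
    by (rule sigma_sets.Basic)
  moreover have "{x::real^'d. t *\<^sub>R x \<in> a} = {x::real^'d. x$i \<in> (\<lambda>y. t * y) -` T}" using iT(1) by simp
  ultimately show ?case by simp
next
  case Empty then show ?case by (simp add: sigma_sets.Empty)
next
  case (Compl a)
  have "{x::real^'d. t *\<^sub>R x \<in> UNIV - a} = UNIV - {x. t *\<^sub>R x \<in> a}" by blast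
  then show ?case using sigma_sets.Compl[OF Compl.IH] by simp
next
  case (Union a)
  have "{x::real^'d. t *\<^sub>R x \<in> (\<Union>i. a i)} = (\<Union>i. {x. t *\<^sub>R x \<in> a i})" by blast
  then show ?case using sigma_sets.Union[of "\<lambda>i. {x. t *\<^sub>R x \<in> a i}", OF Union.IH] by simp
qed

definition Nn :: "(real^'d::finite) set" where "Nn = {x. \<forall>l. 0 \<le> x$l}"

definition scinv :: "(real^'d::finite) set \<Rightarrow> bool" where
  "scinv R \<longleftrightarrow> (\<forall>t>0. \<forall>x. (t *\<^sub>R x \<in> R) = (x \<in> R))"

lemma Nn_borel: "Nn \<in> sets (borel :: (real^'d::finite) measure)"
proof -
  have "closed {x::real^'d. \<forall>l. 0 \<le> x$l}"
    by (intro closed_Collect_all closed_Collect_le continuous_on_const continuous_on_component continuous_on_id)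
  then show ?thesis unfolding Nn_def by (rule borel_closed)
qed

lemma L_sub_Nn: "L_set \<subseteq> Nn" unfolding L_set_def Nn_def by blast

lemma borel_scale: "G \<in> sets borel \<Longrightarrow> {x::real^'d::finite. s *\<^sub>R x \<in> G} \<in> sets borel"
proof -
  assume G: "G \<in> sets borel"
  have m: "(\<lambda>x::real^'d. s *\<^sub>R x) \<in> borel_measurable borel"
    by (intro borel_measurable_continuous_onI continuous_intros)
  have "(\<lambda>x::real^'d. s *\<^sub>R x) -` G \<inter> space borel \<in> sets borel" by (rule measurable_sets[OF m G])
  then show ?thesis by (simp add: vimage_def)
qed

lemma scale_img: "t > 0 \<Longrightarrow> (\<lambda>x::real^'d::finite. t *\<^sub>R x) ` A = {x. (1/t) *\<^sub>R x \<in> A}"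
proof (intro set_eqI iffI)
  fix x assume t: "t > 0" "x \<in> (\<lambda>x. t *\<^sub>R x) ` A"
  then show "x \<in> {x. (1/t) *\<^sub>R x \<in> A}" by auto
next
  fix x assume t: "t > 0" and "x \<in> {x. (1/t) *\<^sub>R x \<in> A}"
  then have "(1/t) *\<^sub>R x \<in> A" "x = t *\<^sub>R ((1/t) *\<^sub>R x)" by auto
  then show "x \<in> (\<lambda>x. t *\<^sub>R x) ` A" by (rule rev_image_eqI)
qed

lemma Nn_scale: "t > 0 \<Longrightarrow> (t *\<^sub>R x \<in> Nn) = (x \<in> Nn)"
  unfolding Nn_def by (auto simp: zero_le_mult_iff)

locale mpareto =
  fixes P :: "(real^'d::finite) measure"
  assumes mp: "multivariate_pareto P"
begin

lemma prob: "prob_space P" using mp unfolding multivariate_pareto_def by blast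
lemma sets_P[simp, measurable_cong]: "sets P = sets borel" using mp unfolding multivariate_pareto_def by blast
lemma space_P[simp]: "space P = UNIV" using sets_eq_imp_space_eq[OF sets_P] by simp
lemma L1: "emeasure P L_set = 1" using mp unfolding multivariate_pareto_def by blast
lemma pos: "measure P {x. 1 < x$i} > 0" using mp unfolding multivariate_pareto_def by blast
lemma homog: "t \<ge> 1 \<Longrightarrow> A \<in> sets borel \<Longrightarrow> A \<subseteq> L_set \<Longrightarrow>
        measure P ((\<lambda>x. t *\<^sub>R x) ` A) = measure P A / t"
  using mp unfolding multivariate_pareto_def by blast

lemma E_borel: "{x::real^'d. a < x$i} \<in> sets borel"
  using borel_nth[of "{a<..}" i] by simp

lemma AE_Nn: "AE x in P. x \<in> Nn"
proof -
  interpret prob_space P by (rule prob)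
  have "L_set \<in> sets P" using L1 emeasure_notin_sets[of L_set P] by (metis zero_neq_one)
  then have "AE x in P. x \<in> L_set" using L1 by (simp add: AE_in_set_eq_1 emeasure_eq_measure)
  then show ?thesis using L_sub_Nn by (auto elim: AE_mp)
qed

lemma meas_Nn: "A \<in> sets borel \<Longrightarrow> measure P (A \<inter> Nn) = measure P A"
  by (rule measure_eq_AE) (use AE_Nn Nn_borel in auto)

lemma homog_k:
  assumes R: "scinv R" "R \<in> sets borel" and a: "a \<ge> 1"
  shows "measure P (R \<inter> {x. a < x$k}) = measure P (R \<inter> {x. 1 < x$k}) / a"
proof -
  define B where "B = R \<inter> {x. 1 < x$k} \<inter> Nn"
  have Bb: "B \<in> sets borel" unfolding B_def using R E_borel Nn_borel by auto
  have BL: "B \<subseteq> L_set" unfolding B_def L_set_def Nn_def by auto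
  have "(\<lambda>x. a *\<^sub>R x) ` B = {x. (1/a) *\<^sub>R x \<in> B}" using a by (intro scale_img) simp
  also have "\<dots> = R \<inter> {x. a < x$k} \<inter> Nn"
    using a R(1) unfolding B_def scinv_def by (auto simp: Nn_scale field_simps)
  finally have "measure P (R \<inter> {x. a < x$k} \<inter> Nn) = measure P B / a"
    using homog[OF a Bb BL] by simp
  then show ?thesis unfolding B_def using meas_Nn R E_borel
    by (metis sets.Int sets_P)
qed

lemma homog_s:
  assumes R: "scinv R" "R \<in> sets borel" and G: "G \<in> sets borel" "G \<subseteq> {x. 1 < x$m}"
    and s: "0 < s" "s \<le> 1"
  shows "measure P (R \<inter> G \<inter> {x. s < x$k}) = measure P (R \<inter> {x. s *\<^sub>R x \<in> G} \<inter> {x. 1 < x$k}) / s"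
proof -
  define B where "B = R \<inter> G \<inter> {x. s < x$k} \<inter> Nn"
  have Bb: "B \<in> sets borel" unfolding B_def using R G E_borel Nn_borel by auto
  have BL: "B \<subseteq> L_set" unfolding B_def L_set_def Nn_def using G by auto
  have t: "1/s \<ge> 1" using s by simp
  have "(\<lambda>x. (1/s) *\<^sub>R x) ` B = {x. (1/(1/s)) *\<^sub>R x \<in> B}" using s by (intro scale_img) simp
  also have "\<dots> = R \<inter> {x. s *\<^sub>R x \<in> G} \<inter> {x. 1 < x$k} \<inter> Nn"
    using s R(1) unfolding B_def scinv_def by (auto simp: Nn_scale field_simps)
  finally have "measure P (R \<inter> {x. s *\<^sub>R x \<in> G} \<inter> {x. 1 < x$k} \<inter> Nn) = measure P B / (1/s)"
    using homog[OF t Bb BL] by simp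
  moreover have "measure P B = measure P (R \<inter> G \<inter> {x. s < x$k})"
    unfolding B_def using meas_Nn R G E_borel by (metis sets.Int sets_P)
  moreover have "measure P (R \<inter> {x. s *\<^sub>R x \<in> G} \<inter> {x. 1 < x$k} \<inter> Nn) = measure P (R \<inter> {x. s *\<^sub>R x \<in> G} \<inter> {x. 1 < x$k})"
    using meas_Nn R borel_scale[OF G(1)] E_borel by (metis sets.Int sets_P)
  ultimately show ?thesis using s by (simp add: field_simps)
qed

end

lemma dyn:
  assumes M: "prob_space M" "space M = UNIV" and G: "Int_stable G" "sigma_sets UNIV G \<subseteq> sets M"
    and R: "R \<in> sets M" and base: "\<And>H. H \<in> G \<Longrightarrow> measure M (R \<inter> H) = measure M R * measure M H"
    and H: "H \<in> sigma_sets UNIV G"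
  shows "measure M (R \<inter> H) = measure M R * measure M H"
proof -
  have GP: "G \<subseteq> Pow UNIV" by simp
  show ?thesis using G(1) GP H
proof (induction rule: sigma_sets_induct_disjoint)
  case (basic A) then show ?case by (rule base)
next
  case empty then show ?case by simp
next
  case (compl A)
  interpret prob_space M by (rule M(1))
  have A: "A \<in> sets M" using compl(1) G(2) by blast
  have "R \<inter> (UNIV - A) = R - (R \<inter> A)" by blast
  then have "measure M (R \<inter> (UNIV - A)) = measure M R - measure M (R \<inter> A)"
    using finite_measure_Diff[of R "R \<inter> A"] R A by simp
  moreover have "measure M (UNIV - A) = 1 - measure M A" using prob_compl[OF A] M(2) by simp
  moreover have "measure M R - measure M R * measure M A = measure M R * (1 - measure M A)"
    by (simp add: right_diff_distrib)
  ultimately show ?case using compl(2) by simp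
next
  case (union A)
  interpret prob_space M by (rule M(1))
  have A: "range A \<subseteq> sets M" using union(2) G(2) by blast
  have s1: "(\<lambda>i. measure M (A i)) sums measure M (\<Union>i. A i)"
    by (rule finite_measure_UNION[OF A union(1)])
  have A2: "range (\<lambda>i. R \<inter> A i) \<subseteq> sets M" using A R by blast
  have d2: "disjoint_family (\<lambda>i. R \<inter> A i)" using union(1) unfolding disjoint_family_on_def by blast
  have s2: "(\<lambda>i. measure M (R \<inter> A i)) sums measure M (\<Union>i. R \<inter> A i)"
    by (rule finite_measure_UNION[OF A2 d2])
  have "(\<lambda>i. measure M (R \<inter> A i)) sums (measure M R * measure M (\<Union>i. A i))"
    using sums_mult[OF s1, of "measure M R"] union(3) by simp
  then have "measure M (\<Union>i. R \<inter> A i) = measure M R * measure M (\<Union>i. A i)"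
    using s2 sums_unique2 by blast
  moreover have "(\<Union>i. R \<inter> A i) = R \<inter> (\<Union>i. A i)" by blast
  ultimately show ?case by simp
qed
qed

context mpareto
begin

abbreviation "Q m \<equiv> cond_law P m"

lemma E_pos: "emeasure P {x. 1 < x$m} \<noteq> 0" "emeasure P {x. 1 < x$m} \<noteq> \<infinity>"
proof -
  interpret prob_space P by (rule prob)
  show "emeasure P {x. 1 < x$m} \<noteq> 0" using pos[of m] by (simp add: emeasure_eq_measure)
  show "emeasure P {x. 1 < x$m} \<noteq> \<infinity>" by (simp add: emeasure_eq_measure)
qed

lemma Q_prob: "prob_space (Q m)"
  unfolding cond_law_def by (rule prob_space_uniform_measure[OF E_pos])

lemma sets_Q[simp, measurable_cong]: "sets (Q m) = sets borel"
  unfolding cond_law_def by simp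

lemma space_Q[simp]: "space (Q m) = UNIV"
  unfolding cond_law_def by simp

lemma meas_Q: "A \<in> sets borel \<Longrightarrow> measure (Q m) A = measure P ({x. 1 < x$m} \<inter> A) / measure P {x. 1 < x$m}"
  unfolding cond_law_def by (rule measure_uniform_measure[OF E_pos]) simp

lemma subalg: "subalgebra (Q m) (coord_sigma S)"
  unfolding subalgebra_def using cs_sub_borel by simp

lemma sfs: "sigma_finite_subalgebra (Q m) (coord_sigma S)"
proof -
  interpret prob_space "Q m" by (rule Q_prob)
  show ?thesis
    by (rule finite_measure_subalgebra_is_sigma_finite, rule finite_measure_subalgebra.intro)
       (unfold_locales, rule subalg)
qed

lemma AE_Q_P: "(AE x in P. x \<in> {x. 1 < x$m} \<longrightarrow> Pr x) \<Longrightarrow> AE x in Q m. Pr x"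
  unfolding cond_law_def by (rule AE_uniform_measureI) (simp_all add: E_borel)

lemma scinv_UNIV: "scinv UNIV" unfolding scinv_def by simp

lemma Q_basic_k:
  assumes R: "scinv R" "R \<in> sets borel"
  shows "measure (Q k) (R \<inter> {x. a < x$k}) = measure (Q k) R * measure (Q k) {x. a < x$k}"
proof (cases "a < 1")
  case True
  have "{x. 1 < x$k} \<inter> (R \<inter> {x. a < x$k}) = {x. 1 < x$k} \<inter> R" using True by auto
  moreover have "{x. 1 < x$k} \<inter> {x::real^'d. a < x$k} = {x. 1 < x$k}" using True by auto
  ultimately show ?thesis using meas_Q[of _ k] R E_borel pos[of k] by (simp add: sets.Int)
next
  case False
  then have a: "a \<ge> 1" by simp
  have e1: "{x. 1 < x$k} \<inter> (R \<inter> {x. a < x$k}) = R \<inter> {x. a < x$k}" using a by auto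
  have e2: "{x. 1 < x$k} \<inter> {x::real^'d. a < x$k} = UNIV \<inter> {x. a < x$k}" using a by auto
  have e3: "{x. 1 < x$k} \<inter> R = R \<inter> {x. 1 < x$k}" by auto
  have "measure (Q k) (R \<inter> {x. a < x$k}) = measure P (R \<inter> {x. 1 < x$k}) / a / measure P {x. 1 < x$k}"
    using meas_Q[of "R \<inter> {x. a < x$k}" k] homog_k[OF R a, of k] R E_borel e1 by (simp add: sets.Int)
  moreover have "measure (Q k) {x. a < x$k} = measure P (UNIV \<inter> {x. 1 < x$k}) / a / measure P {x. 1 < x$k}"
    using meas_Q[of "{x. a < x$k}" k] homog_k[OF scinv_UNIV _ a, of k] E_borel e2 by simp
  moreover have "measure (Q k) R = measure P (R \<inter> {x. 1 < x$k}) / measure P {x. 1 < x$k}"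
    using meas_Q[of R k] R e3 by simp
  ultimately show ?thesis using pos[of k] by simp
qed

lemma a_set:
  assumes R: "scinv R" "R \<in> sets borel" and T: "T \<in> sets borel"
  shows "measure (Q k) (R \<inter> {x. x$k \<in> T}) = measure (Q k) R * measure (Q k) {x. x$k \<in> T}"
proof -
  let ?G = "range (\<lambda>a. {x::real^'d. a < x$k})"
  have eqG: "{(\<lambda>x::real^'d. x$k) -` A \<inter> UNIV | A. A \<in> range greaterThan} = ?G"
  proof (intro set_eqI iffI)
    fix X assume "X \<in> ?G"
    then obtain a where "X = {x::real^'d. a < x$k}" by blast
    then have "X = (\<lambda>x::real^'d. x$k) -` {a<..} \<inter> UNIV" by auto
    then show "X \<in> {(\<lambda>x::real^'d. x$k) -` A \<inter> UNIV | A. A \<in> range greaterThan}"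
      by (intro CollectI exI[of _ "{a<..}"] conjI rangeI)
  next
    fix X assume "X \<in> {(\<lambda>x::real^'d. x$k) -` A \<inter> UNIV | A. A \<in> range greaterThan}"
    then obtain a where "X = (\<lambda>x::real^'d. x$k) -` {a<..} \<inter> UNIV" by blast
    then have "X = {x::real^'d. a < x$k}" by auto
    then show "X \<in> ?G" by (intro image_eqI[OF _ UNIV_I])
  qed
  have "{(\<lambda>x::real^'d. x$k) -` A \<inter> UNIV | A. A \<in> sigma_sets UNIV (range greaterThan)} = sigma_sets UNIV ?G"
    unfolding eqG[symmetric] by (rule sigma_sets_vimage_commute) simp
  moreover have Ts: "T \<in> sigma_sets UNIV (range greaterThan)"
  proof -
    have "sets (borel::real measure) = sigma_sets UNIV (range greaterThan)"
      by (subst borel_Ioi) (rule sets_measure_of, simp)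
    then show ?thesis using T by simp
  qed
  moreover have "(\<lambda>x::real^'d. x$k) -` T \<inter> UNIV \<in> {(\<lambda>x::real^'d. x$k) -` A \<inter> UNIV | A. A \<in> sigma_sets UNIV (range greaterThan)}"
    using Ts by (intro CollectI exI[of _ T] conjI refl)
  ultimately have "(\<lambda>x::real^'d. x$k) -` T \<inter> UNIV \<in> sigma_sets UNIV ?G" by simp
  then have TG: "{x. x$k \<in> T} \<in> sigma_sets UNIV ?G" by (simp add: vimage_def)
  have IS: "Int_stable ?G"
    unfolding Int_stable_def
  proof (intro ballI)
    fix A B assume "A \<in> ?G" "B \<in> ?G"
    then obtain a b where ab: "A = {x. a < x$k}" "B = {x. b < x$k}" by blast
    then have "A \<inter> B = {x. max a b < x$k}" by auto
    then show "A \<inter> B \<in> ?G" by blast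
  qed
  have Gsub: "?G \<subseteq> sets (Q k)"
  proof
    fix X assume "X \<in> ?G"
    then obtain a where "X = {x::real^'d. a < x$k}" by blast
    then show "X \<in> sets (Q k)" using E_borel by simp
  qed
  have GS: "sigma_sets UNIV ?G \<subseteq> sets (Q k)"
    using sets.sigma_sets_subset[OF Gsub] by simp
  show ?thesis
  proof (rule dyn[OF Q_prob space_Q IS GS _ _ TG])
    show "R \<in> sets (Q k)" using R by simp
    fix H assume "H \<in> ?G"
    then obtain a where "H = {x::real^'d. a < x$k}" by blast
    then show "measure (Q k) (R \<inter> H) = measure (Q k) R * measure (Q k) H" using Q_basic_k[OF R] by simp
  qed
qed

end

lemma dyn_int:
  fixes g :: "'a \<Rightarrow> real"
  assumes M: "prob_space M" "space M = UNIV" and G: "Int_stable G" "sigma_sets UNIV G \<subseteq> sets M"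
    and g: "integrable M g" "(\<integral>x. g x \<partial>M) = 0"
    and base: "\<And>H. H \<in> G \<Longrightarrow> (\<integral>x. indicator H x * g x \<partial>M) = 0"
    and H: "H \<in> sigma_sets UNIV G"
  shows "(\<integral>x. indicator H x * g x \<partial>M) = 0"
proof -
  have GP: "G \<subseteq> Pow UNIV" by simp
  show ?thesis using G(1) GP H
  proof (induction rule: sigma_sets_induct_disjoint)
    case (basic A) then show ?case by (rule base)
  next
    case empty then show ?case by simp
  next
    case (compl A)
    have A: "A \<in> sets M" using compl(1) G(2) by blast
    have "\<And>x. indicator (UNIV - A) x * g x = g x - indicator A x * g x"
      by (simp add: indicator_def)
    then have "(\<integral>x. indicator (UNIV - A) x * g x \<partial>M) = (\<integral>x. g x - indicator A x * g x \<partial>M)" by simp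
    also have "\<dots> = (\<integral>x. g x \<partial>M) - (\<integral>x. indicator A x * g x \<partial>M)"
      by (rule Bochner_Integration.integral_diff) (use g(1) A integrable_real_mult_indicator[OF A g(1)] in \<open>simp_all add: mult.commute\<close>)
    finally show ?case using compl(2) g(2) by simp
  next
    case (union A)
    have A: "\<And>i. A i \<in> sets M" using union(2) G(2) by blast
    have d: "\<And>i j. i \<noteq> j \<Longrightarrow> A i \<inter> A j = {}" using union(1) unfolding disjoint_family_on_def by blast
    have UA: "(\<Union>i. A i) \<in> sets M" using A by blast
    have si: "set_integrable M (\<Union>i. A i) g"
      unfolding set_integrable_def using integrable_real_mult_indicator[OF UA g(1)] by (simp add: mult.commute)
    have "(LINT x:(\<Union>i. A i)|M. g x) = (\<Sum>i. (LINT x:(A i)|M. g x))"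
      by (rule lebesgue_integral_countable_add[OF A d si])
    also have "\<dots> = 0" using union(3) unfolding set_lebesgue_integral_def by simp
    finally show ?case unfolding set_lebesgue_integral_def by simp
  qed
qed

context mpareto
begin

lemma a_cond:
  assumes R: "scinv R" "R \<in> sets borel"
  shows "AE x in Q k. real_cond_exp (Q k) (coord_sigma {k}) (indicator R) x = measure (Q k) R"
proof -
  interpret sigma_finite_subalgebra "Q k" "coord_sigma {k}" by (rule sfs)
  interpret prob_space "Q k" by (rule Q_prob)
  show ?thesis
  proof (rule real_cond_exp_charact)
    fix A assume A: "A \<in> sets (coord_sigma {k})"
    then obtain T where T: "T \<in> sets borel" "A = {x. x$k \<in> T}" using cs_one by blast
    have Ab: "A \<in> sets borel" using A cs_sub_borel by blast
    have "(LINT x:A|Q k. indicator R x) = (\<integral>x. indicator (A \<inter> R) x \<partial>Q k)"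
      unfolding set_lebesgue_integral_def by (intro Bochner_Integration.integral_cong) (auto simp: indicator_def)
    also have "\<dots> = measure (Q k) (A \<inter> R)" by simp
    also have "\<dots> = measure (Q k) R * measure (Q k) A"
      using a_set[OF R T(1), of k] T(2) by (simp add: Int_commute)
    also have "\<dots> = (LINT x:A|Q k. measure (Q k) R)"
      unfolding set_lebesgue_integral_def by simp
    finally show "(LINT x:A|Q k. indicator R x) = (LINT x:A|Q k. measure (Q k) R)" .
  next
    show "integrable (Q k) (indicator R :: _ \<Rightarrow> real)" using R by (intro integrable_real_indicator) (simp_all add: emeasure_eq_measure)
    show "integrable (Q k) (\<lambda>x. measure (Q k) R)" by simp
    show "(\<lambda>x. measure (Q k) R) \<in> borel_measurable (coord_sigma {k})" by simp
  qed
qed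

lemma a_int:
  assumes R: "scinv R" "R \<in> sets borel"
    and f: "f \<in> borel_measurable (coord_sigma {k})" "integrable (Q k) f"
  shows "(\<integral>x. f x * indicator R x \<partial>Q k) = measure (Q k) R * (\<integral>x. f x \<partial>Q k)"
proof -
  interpret sigma_finite_subalgebra "Q k" "coord_sigma {k}" by (rule sfs)
  have Rb: "R \<in> sets (Q k)" using R by simp
  have fm: "f \<in> borel_measurable (Q k)" by (rule measurable_from_subalg[OF subalg f(1)])
  have "(\<integral>x. f x * indicator R x \<partial>Q k) = (\<integral>x. f x * real_cond_exp (Q k) (coord_sigma {k}) (indicator R) x \<partial>Q k)"
    by (rule real_cond_exp_intg(2)[symmetric])
       (use integrable_real_mult_indicator[OF Rb f(2)] f(1) R in simp_all)
  also have "\<dots> = (\<integral>x. f x * measure (Q k) R \<partial>Q k)"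
    by (rule integral_cong_AE) (use a_cond[OF R, of k] fm in \<open>auto intro!: borel_measurable_times borel_measurable_cond_exp2\<close>)
  also have "\<dots> = measure (Q k) R * (\<integral>x. f x \<partial>Q k)" by (simp add: mult.commute)
  finally show ?thesis .
qed

end

context mpareto
begin

lemma cs_Q: "H \<in> sets (coord_sigma S) \<Longrightarrow> H \<in> sets (Q m)"
  using cs_sub_borel by auto

lemma b1:
  assumes CI: "cond_indep (Q k) A {k} C" and X: "X \<in> sets (coord_sigma A)"
    and W: "W \<in> sets (coord_sigma (C \<union> {k}))"
  shows "(\<integral>x. indicator W x * indicator X x \<partial>Q k) =
         (\<integral>x. indicator W x * real_cond_exp (Q k) (coord_sigma {k}) (indicator X) x \<partial>Q k)"
proof -
  interpret sigma_finite_subalgebra "Q k" "coord_sigma {k}" by (rule sfs)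
  interpret prob_space "Q k" by (rule Q_prob)
  define \<xi> where "\<xi> = real_cond_exp (Q k) (coord_sigma {k}) (indicator X)"
  have XQ: "X \<in> sets (Q k)" by (rule cs_Q[OF X])
  have iX: "integrable (Q k) (indicator X :: _ \<Rightarrow> real)"
    using XQ by (intro integrable_real_indicator) (simp_all add: emeasure_eq_measure)
  have i\<xi>: "integrable (Q k) \<xi>" unfolding \<xi>_def by (rule real_cond_exp_int(1)[OF iX])
  have \<xi>F: "\<xi> \<in> borel_measurable (coord_sigma {k})" unfolding \<xi>_def by (rule borel_measurable_cond_exp)
  have \<xi>M: "\<xi> \<in> borel_measurable (Q k)" unfolding \<xi>_def by (rule borel_measurable_cond_exp2)
  define g where "g = (\<lambda>x. indicator X x - \<xi> x)"
  have ig: "integrable (Q k) g" unfolding g_def using iX i\<xi> by simp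
  have g0: "(\<integral>x. g x \<partial>Q k) = 0" unfolding g_def using iX i\<xi> real_cond_exp_int(2)[OF iX]
    by (simp add: \<xi>_def)
  have GS: "sigma_sets UNIV (prodfam C {k}) \<subseteq> sets (Q k)"
    using cs_union[of C "{k}"] cs_sub_borel[of "C \<union> {k}"] by simp
  have Wsig: "W \<in> sigma_sets UNIV (prodfam C {k})" using W cs_union by blast
  have main: "(\<integral>x. indicator W x * g x \<partial>Q k) = 0"
  proof (rule dyn_int[OF Q_prob space_Q prodfam_Int_stable GS ig g0 _ Wsig])
    fix H assume "H \<in> prodfam C {k}"
    then obtain Z K where H: "H = Z \<inter> K" and Z: "Z \<in> sets (coord_sigma C)" and K: "K \<in> sets (coord_sigma {k})"
      unfolding prodfam_def by blast
    have ZQ: "Z \<in> sets (Q k)" by (rule cs_Q[OF Z])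
    have KQ: "K \<in> sets (Q k)" by (rule cs_Q[OF K])
    have iZ: "integrable (Q k) (indicator Z :: _ \<Rightarrow> real)"
      using ZQ by (intro integrable_real_indicator) (simp_all add: emeasure_eq_measure)
    have iXZ: "integrable (Q k) (indicator (X \<inter> Z) :: _ \<Rightarrow> real)"
      using ZQ XQ by (intro integrable_real_indicator) (simp_all add: emeasure_eq_measure)
    have KF: "(indicator K :: _ \<Rightarrow> real) \<in> borel_measurable (coord_sigma {k})"
      using K by simp
    have ci: "AE x in Q k. real_cond_exp (Q k) (coord_sigma {k}) (indicator (X \<inter> Z)) x = \<xi> x * real_cond_exp (Q k) (coord_sigma {k}) (indicator Z) x"
      using CI X Z unfolding cond_indep_def \<xi>_def by blast
    have i1: "integrable (Q k) (\<lambda>x. indicator K x * indicator (X \<inter> Z) x :: real)"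
      using integrable_real_mult_indicator[OF KQ iXZ] by (simp add: mult.commute)
    have i2: "integrable (Q k) (\<lambda>x. (indicator K x * \<xi> x) * indicator Z x)"
    proof -
      have "integrable (Q k) (\<lambda>x. \<xi> x * indicator K x)" by (rule integrable_real_mult_indicator[OF KQ i\<xi>])
      then have "integrable (Q k) (\<lambda>x. (\<xi> x * indicator K x) * indicator Z x)" by (rule integrable_real_mult_indicator[OF ZQ])
      then show ?thesis by (simp add: mult_ac)
    qed
    have KxF: "(\<lambda>x. indicator K x * \<xi> x) \<in> borel_measurable (coord_sigma {k})"
      using KF \<xi>F by simp
    have "(\<integral>x. indicator H x * indicator X x \<partial>Q k) = (\<integral>x. indicator K x * indicator (X \<inter> Z) x \<partial>Q k :: real)"
      unfolding H by (intro Bochner_Integration.integral_cong) (auto simp: indicator_def)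
    also have "\<dots> = (\<integral>x. indicator K x * real_cond_exp (Q k) (coord_sigma {k}) (indicator (X \<inter> Z)) x \<partial>Q k)"
      by (rule real_cond_exp_intg(2)[symmetric]) (use i1 KF XQ ZQ in simp_all)
    also have "\<dots> = (\<integral>x. (indicator K x * \<xi> x) * real_cond_exp (Q k) (coord_sigma {k}) (indicator Z) x \<partial>Q k)"
      by (rule integral_cong_AE) (use ci KQ \<xi>M in \<open>auto simp: mult_ac\<close>)
    also have "\<dots> = (\<integral>x. (indicator K x * \<xi> x) * indicator Z x \<partial>Q k)"
      by (rule real_cond_exp_intg(2)) (use i2 KxF ZQ in simp_all)
    also have "\<dots> = (\<integral>x. indicator H x * \<xi> x \<partial>Q k)"
      unfolding H by (intro Bochner_Integration.integral_cong) (auto simp: indicator_def)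
    finally have eq: "(\<integral>x. indicator H x * indicator X x \<partial>Q k) = (\<integral>x. indicator H x * \<xi> x \<partial>Q k)" .
    have HQ: "H \<in> sets (Q k)" using H ZQ KQ by simp
    have "(\<integral>x. indicator H x * g x \<partial>Q k) = (\<integral>x. indicator H x * indicator X x - indicator H x * \<xi> x \<partial>Q k)"
      unfolding g_def by (simp add: right_diff_distrib)
    also have "\<dots> = (\<integral>x. indicator H x * indicator X x \<partial>Q k) - (\<integral>x. indicator H x * \<xi> x \<partial>Q k)"
      by (rule Bochner_Integration.integral_diff)
         (use integrable_real_mult_indicator[OF HQ iX] integrable_real_mult_indicator[OF HQ i\<xi>] in \<open>simp_all add: mult.commute\<close>)
    finally show "(\<integral>x. indicator H x * g x \<partial>Q k) = 0" using eq by simp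
  qed
  have WQ: "W \<in> sets (Q k)" by (rule cs_Q[OF W])
  have "(\<integral>x. indicator W x * g x \<partial>Q k) = (\<integral>x. indicator W x * indicator X x - indicator W x * \<xi> x \<partial>Q k)"
    unfolding g_def by (simp add: right_diff_distrib)
  also have "\<dots> = (\<integral>x. indicator W x * indicator X x \<partial>Q k) - (\<integral>x. indicator W x * \<xi> x \<partial>Q k)"
    by (rule Bochner_Integration.integral_diff)
       (use integrable_real_mult_indicator[OF WQ iX] integrable_real_mult_indicator[OF WQ i\<xi>] in \<open>simp_all add: mult.commute\<close>)
  finally show ?thesis using main unfolding \<xi>_def by simp
qed

end

context mpareto
begin

lemma b_ind:
  assumes CI: "cond_indep (Q k) A {k} C" and R: "scinv R" "R \<in> sets (coord_sigma (C \<union> {k}))"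
    and H: "H \<in> sets (coord_sigma (A \<union> {k}))"
  shows "measure (Q k) (R \<inter> H) = measure (Q k) R * measure (Q k) H"
proof -
  interpret sigma_finite_subalgebra "Q k" "coord_sigma {k}" by (rule sfs)
  interpret prob_space "Q k" by (rule Q_prob)
  have RQ: "R \<in> sets (Q k)" by (rule cs_Q[OF R(2)])
  have Rb: "R \<in> sets borel" using RQ by simp
  have GS: "sigma_sets UNIV (prodfam A {k}) \<subseteq> sets (Q k)"
    using cs_union[of A "{k}"] cs_sub_borel[of "A \<union> {k}"] by simp
  have Hsig: "H \<in> sigma_sets UNIV (prodfam A {k})" using H cs_union by blast
  show ?thesis
  proof (rule dyn[OF Q_prob space_Q prodfam_Int_stable GS RQ _ Hsig])
    fix H assume "H \<in> prodfam A {k}"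
    then obtain X K where H: "H = X \<inter> K" and X: "X \<in> sets (coord_sigma A)" and K: "K \<in> sets (coord_sigma {k})"
      unfolding prodfam_def by blast
    define \<xi> where "\<xi> = real_cond_exp (Q k) (coord_sigma {k}) (indicator X)"
    have XQ: "X \<in> sets (Q k)" by (rule cs_Q[OF X])
    have KQ: "K \<in> sets (Q k)" by (rule cs_Q[OF K])
    have iX: "integrable (Q k) (indicator X :: _ \<Rightarrow> real)"
      using XQ by (intro integrable_real_indicator) (simp_all add: emeasure_eq_measure)
    have i\<xi>: "integrable (Q k) \<xi>" unfolding \<xi>_def by (rule real_cond_exp_int(1)[OF iX])
    have \<xi>F: "\<xi> \<in> borel_measurable (coord_sigma {k})" unfolding \<xi>_def by (rule borel_measurable_cond_exp)
    have KF: "(indicator K :: _ \<Rightarrow> real) \<in> borel_measurable (coord_sigma {k})"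
      using K by simp
    have RK: "R \<inter> K \<in> sets (coord_sigma (C \<union> {k}))"
      using R(2) K cs_mono[of "{k}" "C \<union> {k}"] by blast
    have i1: "integrable (Q k) (\<lambda>x. \<xi> x * indicator K x)" by (rule integrable_real_mult_indicator[OF KQ i\<xi>])
    have i2: "integrable (Q k) (\<lambda>x. indicator K x * indicator X x :: real)"
      using integrable_real_mult_indicator[OF KQ iX] by (simp add: mult.commute)
    have "measure (Q k) (R \<inter> H) = (\<integral>x. indicator (R \<inter> K) x * indicator X x \<partial>Q k)"
    proof -
      have "measure (Q k) (R \<inter> H) = (\<integral>x. indicator (R \<inter> H) x \<partial>Q k)" by simp
      also have "\<dots> = (\<integral>x. indicator (R \<inter> K) x * indicator X x \<partial>Q k)"
        unfolding H by (intro Bochner_Integration.integral_cong) (auto simp: indicator_def)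
      finally show ?thesis .
    qed
    also have "\<dots> = (\<integral>x. indicator (R \<inter> K) x * \<xi> x \<partial>Q k)"
      unfolding \<xi>_def by (rule b1[OF CI X RK])
    also have "\<dots> = (\<integral>x. (\<xi> x * indicator K x) * indicator R x \<partial>Q k)"
      by (intro Bochner_Integration.integral_cong) (auto simp: indicator_def)
    also have "\<dots> = measure (Q k) R * (\<integral>x. \<xi> x * indicator K x \<partial>Q k)"
      by (rule a_int[OF R(1) Rb]) (use \<xi>F KF i1 in simp_all)
    also have "(\<integral>x. \<xi> x * indicator K x \<partial>Q k) = (\<integral>x. indicator K x * indicator X x \<partial>Q k)"
      using real_cond_exp_intg(2)[of "indicator K" "indicator X"] i2 KF XQ unfolding \<xi>_def
      by (simp add: mult.commute)
    also have "\<dots> = measure (Q k) H"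
    proof -
      have "(\<integral>x. indicator K x * indicator X x \<partial>Q k) = (\<integral>x. indicator H x \<partial>Q k :: real)"
        unfolding H by (intro Bochner_Integration.integral_cong) (auto simp: indicator_def)
      then show ?thesis by simp
    qed
    finally show "measure (Q k) (R \<inter> H) = measure (Q k) R * measure (Q k) H" .
  qed
qed

end

context mpareto
begin

lemma F_aux:
  assumes CI: "cond_indep (Q k) A {k} C" and R: "scinv R" "R \<in> sets (coord_sigma (C \<union> {k}))"
    and G1: "G1 \<in> sets (coord_sigma (A \<union> {k}))" "G1 \<subseteq> {x. 1 < x$m}"
  shows "measure P (R \<inter> G1 \<inter> {x. 0 < x$k}) = measure (Q k) R * measure P (G1 \<inter> {x. 0 < x$k})"
proof -
  interpret prob_space P by (rule prob)
  have Rb: "R \<in> sets borel" using R(2) cs_sub_borel by blast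
  have G1b: "G1 \<in> sets borel" using G1(1) cs_sub_borel by blast
  define \<nu> where "\<nu> = measure (Q k) R"
  have step: "measure P (R \<inter> G1 \<inter> {x. s < x$k}) = \<nu> * measure P (UNIV \<inter> G1 \<inter> {x. s < x$k})"
    if s: "0 < s" "s \<le> 1" for s
  proof -
    define G2 where "G2 = {x::real^'d. s *\<^sub>R x \<in> G1}"
    have G2: "G2 \<in> sets (coord_sigma (A \<union> {k}))" unfolding G2_def by (rule cs_scale[OF s(1) G1(1)])
    have G2b: "G2 \<in> sets borel" using G2 cs_sub_borel by blast
    have h1: "measure P (R \<inter> G1 \<inter> {x. s < x$k}) = measure P (R \<inter> G2 \<inter> {x. 1 < x$k}) / s"
      unfolding G2_def by (rule homog_s[OF R(1) Rb G1b G1(2) s])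
    have h2: "measure P (UNIV \<inter> G1 \<inter> {x. s < x$k}) = measure P (UNIV \<inter> G2 \<inter> {x. 1 < x$k}) / s"
      unfolding G2_def by (rule homog_s[OF scinv_UNIV _ G1b G1(2) s]) simp
    have bb: "measure (Q k) (R \<inter> G2) = \<nu> * measure (Q k) G2"
      unfolding \<nu>_def by (rule b_ind[OF CI R G2])
    have "measure P ({x. 1 < x$k} \<inter> (R \<inter> G2)) = \<nu> * measure P ({x. 1 < x$k} \<inter> G2)"
      using bb meas_Q[of "R \<inter> G2" k] meas_Q[of G2 k] Rb G2b pos[of k] by (simp add: sets.Int)
    moreover have "{x. 1 < x$k} \<inter> (R \<inter> G2) = R \<inter> G2 \<inter> {x. 1 < x$k}" by blast
    moreover have "{x. 1 < x$k} \<inter> G2 = UNIV \<inter> G2 \<inter> {x. 1 < x$k}" by blast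
    ultimately show ?thesis using h1 h2 by simp
  qed
  define s where "s n = inverse (real (Suc n))" for n
  have s01: "0 < s n" "s n \<le> 1" for n unfolding s_def by (auto simp: field_simps)
  have inc: "incseq (\<lambda>n. X \<inter> G1 \<inter> {x. s n < x$k})" for X
  proof (rule incseq_SucI)
    fix n
    have "s (Suc n) \<le> s n" unfolding s_def by (simp add: field_simps)
    then show "X \<inter> G1 \<inter> {x. s n < x$k} \<subseteq> X \<inter> G1 \<inter> {x. s (Suc n) < x$k}" by auto
  qed
  have un: "(\<Union>n. X \<inter> G1 \<inter> {x. s n < x$k}) = X \<inter> G1 \<inter> {x. 0 < x$k}" for X
  proof (intro set_eqI iffI)
    fix x assume "x \<in> (\<Union>n. X \<inter> G1 \<inter> {x. s n < x$k})"
    then show "x \<in> X \<inter> G1 \<inter> {x. 0 < x$k}" using s01 by (auto intro: less_trans)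
  next
    fix x assume x: "x \<in> X \<inter> G1 \<inter> {x. 0 < x$k}"
    then obtain n where n: "n > 0" "inverse (real n) < x$k" using ex_inverse_of_nat_less[of "x$k"] by auto
    have "s n \<le> inverse (real n)" unfolding s_def using n(1) by (simp add: field_simps)
    then have "s n < x$k" using n(2) by linarith
    then show "x \<in> (\<Union>n. X \<inter> G1 \<inter> {x. s n < x$k})" using x by auto
  qed
  have lim: "(\<lambda>n. measure P (X \<inter> G1 \<inter> {x. s n < x$k})) \<longlonglongrightarrow> measure P (X \<inter> G1 \<inter> {x. 0 < x$k})"
    if X: "X \<in> sets borel" for X
  proof -
    have "range (\<lambda>n. X \<inter> G1 \<inter> {x. s n < x$k}) \<subseteq> sets P" using X G1b E_borel by auto
    from finite_Lim_measure_incseq[OF this inc] show ?thesis unfolding un .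
  qed
  have "(\<lambda>n. measure P (R \<inter> G1 \<inter> {x. s n < x$k})) \<longlonglongrightarrow> \<nu> * measure P (UNIV \<inter> G1 \<inter> {x. 0 < x$k})"
    unfolding step[OF s01] by (intro tendsto_mult_left lim) simp
  with lim[OF Rb] have "measure P (R \<inter> G1 \<inter> {x. 0 < x$k}) = \<nu> * measure P (UNIV \<inter> G1 \<inter> {x. 0 < x$k})"
    by (rule LIMSEQ_unique)
  then show ?thesis unfolding \<nu>_def by simp
qed

lemma F_ind:
  assumes CI: "cond_indep (Q k) A {k} C" and R: "scinv R" "R \<in> sets (coord_sigma (C \<union> {k}))"
    and G: "G \<in> sets (coord_sigma (A \<union> {k}))" and m: "m \<in> A \<union> {k}"
    and kpos: "AE x in Q m. 0 < x$k"
  shows "measure (Q m) (R \<inter> G) = measure (Q m) R * measure (Q m) G"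
proof -
  interpret prob_space P by (rule prob)
  have Rb: "R \<in> sets borel" using R(2) cs_sub_borel by blast
  have Gb: "G \<in> sets borel" using G cs_sub_borel by blast
  have Em: "{x::real^'d. 1 < x$m} \<in> sets (coord_sigma (A \<union> {k}))"
    using cs_gen[OF m, of "{1<..}"] by simp
  have ae: "AE x in P. x \<in> {x. 1 < x$m} \<longrightarrow> 0 < x$k"
    using kpos unfolding cond_law_def by (subst (asm) AE_uniform_measure) (use E_pos[of m] in \<open>simp_all add: less_top[symmetric]\<close>)
  have rem: "measure P (X \<inter> {x. 1 < x$m} \<inter> {x. 0 < x$k}) = measure P (X \<inter> {x. 1 < x$m})"
    if X: "X \<in> sets borel" for X
    by (rule measure_eq_AE) (use ae X E_borel in auto)
  have main: "measure P (R \<inter> (H \<inter> {x. 1 < x$m})) = measure (Q k) R * measure P (H \<inter> {x. 1 < x$m})"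
    if H: "H \<in> sets (coord_sigma (A \<union> {k}))" for H
  proof -
    have H1: "H \<inter> {x. 1 < x$m} \<in> sets (coord_sigma (A \<union> {k}))" using H Em by simp
    have Hb: "H \<in> sets borel" using H cs_sub_borel by blast
    have "measure P (R \<inter> (H \<inter> {x. 1 < x$m}) \<inter> {x. 0 < x$k}) = measure (Q k) R * measure P ((H \<inter> {x. 1 < x$m}) \<inter> {x. 0 < x$k})"
      by (rule F_aux[OF CI R H1, of m]) blast
    moreover have "R \<inter> (H \<inter> {x. 1 < x$m}) \<inter> {x. 0 < x$k} = (R \<inter> H) \<inter> {x. 1 < x$m} \<inter> {x. 0 < x$k}" by blast
    moreover have "R \<inter> (H \<inter> {x. 1 < x$m}) = (R \<inter> H) \<inter> {x. 1 < x$m}" by blast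
    ultimately show ?thesis using rem[of "R \<inter> H"] rem[of H] Rb Hb by simp
  qed
  have UNIVcs: "UNIV \<in> sets (coord_sigma (A \<union> {k}))" using sets.top[of "coord_sigma (A \<union> {k})"] by simp
  have eR: "measure (Q m) R = measure (Q k) R"
    using main[OF UNIVcs] meas_Q[OF Rb, of m] pos[of m] by (simp add: Int_commute)
  have "measure (Q m) (R \<inter> G) = measure P ({x. 1 < x$m} \<inter> (R \<inter> G)) / measure P {x. 1 < x$m}"
    using meas_Q[of "R \<inter> G" m] Rb Gb by (simp add: sets.Int)
  also have "{x. 1 < x$m} \<inter> (R \<inter> G) = R \<inter> (G \<inter> {x. 1 < x$m})" by blast
  also have "measure P (R \<inter> (G \<inter> {x. 1 < x$m})) / measure P {x. 1 < x$m} = measure (Q k) R * (measure P ({x. 1 < x$m} \<inter> G) / measure P {x. 1 < x$m})"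
    using main[OF G] by (simp add: Int_commute)
  also have "\<dots> = measure (Q m) R * measure (Q m) G" using eR meas_Q[OF Gb, of m] by simp
  finally show ?thesis .
qed

end

lemma var_split:
  fixes U V :: "'a \<Rightarrow> real"
  assumes M: "prob_space M"
    and i: "integrable M U" "integrable M V" "integrable M (\<lambda>x. (U x)\<^sup>2)" "integrable M (\<lambda>x. (V x)\<^sup>2)"
      "integrable M (\<lambda>x. U x * V x)"
    and e: "(\<integral>x. U x * V x \<partial>M) = (\<integral>x. U x \<partial>M) * (\<integral>x. V x \<partial>M)"
  shows "prob_space.variance M (\<lambda>x. U x - V x) = prob_space.variance M U + prob_space.variance M V"
proof -
  interpret prob_space M by (rule M)
  have sq: "(\<lambda>x. (U x - V x)\<^sup>2) = (\<lambda>x. (U x)\<^sup>2 - 2 * (U x * V x) + (V x)\<^sup>2)"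
    by (rule ext) (simp add: power2_diff algebra_simps)
  have iUV: "integrable M (\<lambda>x. U x - V x)" using i by simp
  have i2: "integrable M (\<lambda>x. (U x - V x)\<^sup>2)" unfolding sq using i by simp
  have "expectation (\<lambda>x. (U x - V x)\<^sup>2) = expectation (\<lambda>x. (U x)\<^sup>2) - 2 * expectation (\<lambda>x. U x * V x) + expectation (\<lambda>x. (V x)\<^sup>2)"
    unfolding sq using i by simp
  moreover have "expectation (\<lambda>x. U x - V x) = expectation U - expectation V" using i by simp
  ultimately have "variance (\<lambda>x. U x - V x) = expectation (\<lambda>x. (U x)\<^sup>2) - 2 * (expectation U * expectation V) + expectation (\<lambda>x. (V x)\<^sup>2) - (expectation U - expectation V)\<^sup>2"
    using variance_eq[OF iUV i2] e by simp
  also have "\<dots> = (expectation (\<lambda>x. (U x)\<^sup>2) - (expectation U)\<^sup>2) + (expectation (\<lambda>x. (V x)\<^sup>2) - (expectation V)\<^sup>2)"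
    by (simp add: power2_diff)
  also have "\<dots> = variance U + variance V" using variance_eq i by simp
  finally show ?thesis .
qed

lemma var_neg:
  fixes V :: "'a \<Rightarrow> real"
  assumes M: "prob_space M"
  shows "prob_space.variance M (\<lambda>x. - V x) = prob_space.variance M V"
proof -
  interpret prob_space M by (rule M)
  have "(\<lambda>x. (- V x - expectation (\<lambda>x. - V x))\<^sup>2) = (\<lambda>x. (V x - expectation V)\<^sup>2)"
    by (simp add: power2_commute)
  then show ?thesis by simp
qed

context mpareto
begin

definition Vp :: "'d \<Rightarrow> 'd \<Rightarrow> real^'d \<Rightarrow> real" where
  "Vp j k x = indicator {x. 0 < x$j \<and> 0 < x$k} x * (ln (x$j) - ln (x$k))"

lemma Vp_scale: "t > 0 \<Longrightarrow> Vp j k (t *\<^sub>R x) = Vp j k x"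
proof -
  assume t: "t > 0"
  show ?thesis
  proof (cases "0 < x$j \<and> 0 < x$k")
    case True
    then have "ln (t * x$j) - ln (t * x$k) = ln (x$j) - ln (x$k)" using t by (simp add: ln_mult)
    then show ?thesis using True t unfolding Vp_def by simp
  next
    case False
    then have "\<not> (0 < t * x$j \<and> 0 < t * x$k)" using t by (auto simp: zero_less_mult_iff)
    then show ?thesis using False unfolding Vp_def by simp
  qed
qed

lemma Vp_meas: "j \<in> S \<Longrightarrow> k \<in> S \<Longrightarrow> Vp j k \<in> borel_measurable (coord_sigma S)"
proof -
  assume jk: "j \<in> S" "k \<in> S"
  have mj: "(\<lambda>x. x$j) \<in> borel_measurable (coord_sigma S)" by (rule cs_meas_coord[OF jk(1)])
  have mk: "(\<lambda>x. x$k) \<in> borel_measurable (coord_sigma S)" by (rule cs_meas_coord[OF jk(2)])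
  have s1: "{x::real^'d. 0 < x$j} \<in> sets (coord_sigma S)" using cs_gen[OF jk(1), of "{0<..}"] by simp
  have s2: "{x::real^'d. 0 < x$k} \<in> sets (coord_sigma S)" using cs_gen[OF jk(2), of "{0<..}"] by simp
  have "{x::real^'d. 0 < x$j \<and> 0 < x$k} = {x. 0 < x$j} \<inter> {x. 0 < x$k}" by blast
  then have s: "{x::real^'d. 0 < x$j \<and> 0 < x$k} \<in> sets (coord_sigma S)" using s1 s2 by simp
  show ?thesis unfolding Vp_def
    by (intro borel_measurable_times borel_measurable_indicator s borel_measurable_diff borel_measurable_ln mj mk)
qed

lemma U_meas: "i \<in> S \<Longrightarrow> k \<in> S \<Longrightarrow> (\<lambda>x::real^'d. ln (x$i) - ln (x$k)) \<in> borel_measurable (coord_sigma S)"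
  by (intro borel_measurable_diff borel_measurable_ln cs_meas_coord)

lemma indep_UV:
  assumes CI: "cond_indep (Q k) A {k} C" and i: "i \<in> A" and j: "j \<in> C" and m: "m \<in> A \<union> {k}"
    and kpos: "AE x in Q m. 0 < x$k"
  shows "prob_space.indep_var (Q m) borel (Vp j k) borel (\<lambda>x. ln (x$i) - ln (x$k))"
proof -
  interpret prob_space "Q m" by (rule Q_prob)
  let ?U = "\<lambda>x::real^'d. ln (x$i) - ln (x$k)"
  have VF: "Vp j k \<in> borel_measurable (coord_sigma (C \<union> {k}))" by (rule Vp_meas) (use j in auto)
  have UF: "?U \<in> borel_measurable (coord_sigma (A \<union> {k}))" by (rule U_meas) (use i in auto)
  have VM: "Vp j k \<in> borel_measurable (Q m)" by (rule measurable_from_subalg[OF subalg VF])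
  have UM: "?U \<in> borel_measurable (Q m)" by (rule measurable_from_subalg[OF subalg UF])
  let ?FV = "{Vp j k -` T \<inter> space (Q m) | T. T \<in> sets borel}"
  let ?FU = "{?U -` T \<inter> space (Q m) | T. T \<in> sets borel}"
  have IS: "Int_stable {f -` T \<inter> space (Q m) | T. T \<in> sets (borel :: real measure)}" for f :: "real^'d \<Rightarrow> real"
    unfolding Int_stable_def
  proof (intro ballI)
    fix a b assume "a \<in> {f -` T \<inter> space (Q m) | T. T \<in> sets (borel :: real measure)}"
      "b \<in> {f -` T \<inter> space (Q m) | T. T \<in> sets (borel :: real measure)}"
    then obtain Ta Tb where "a = f -` Ta \<inter> space (Q m)" "Ta \<in> sets borel" "b = f -` Tb \<inter> space (Q m)" "Tb \<in> sets borel"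
      by blast
    then have "a \<inter> b = f -` (Ta \<inter> Tb) \<inter> space (Q m)" "Ta \<inter> Tb \<in> sets borel" by auto
    then show "a \<inter> b \<in> {f -` T \<inter> space (Q m) | T. T \<in> sets (borel :: real measure)}" by blast
  qed
  have ind: "indep_set ?FV ?FU"
  proof (rule indep_setI)
    show "?FV \<subseteq> events" using measurable_sets[OF VM] by blast
    show "?FU \<subseteq> events" using measurable_sets[OF UM] by blast
    fix a b assume "a \<in> ?FV" "b \<in> ?FU"
    then obtain Ta Tb where ab: "a = Vp j k -` Ta \<inter> space (Q m)" "Ta \<in> sets borel" "b = ?U -` Tb \<inter> space (Q m)" "Tb \<in> sets borel"
      by blast
    have a1: "a \<in> sets (coord_sigma (C \<union> {k}))" using measurable_sets[OF VF ab(2)] ab(1) by simp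
    have b1: "b \<in> sets (coord_sigma (A \<union> {k}))" using measurable_sets[OF UF ab(4)] ab(3) by simp
    have sa: "scinv a" unfolding scinv_def ab(1) using Vp_scale by simp
    show "prob (a \<inter> b) = prob a * prob b" by (rule F_ind[OF CI sa a1 b1 m kpos])
  qed
  show ?thesis
    unfolding indep_var_eq
    using VM UM indep_set_sigma_sets[OF ind IS IS] by simp
qed

end

lemma cond_indep_sym: "cond_indep Q A B C \<Longrightarrow> cond_indep Q C B A"
  unfolding cond_indep_def
proof (intro ballI)
  fix X Z assume H: "\<forall>X\<in>sets (coord_sigma A). \<forall>Z\<in>sets (coord_sigma C).
        AE x in Q. real_cond_exp Q (coord_sigma B) (indicator (X \<inter> Z)) x
          = real_cond_exp Q (coord_sigma B) (indicator X) x
            * real_cond_exp Q (coord_sigma B) (indicator Z) x"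
    and X: "X \<in> sets (coord_sigma C)" and Z: "Z \<in> sets (coord_sigma A)"
  from H Z X have "AE x in Q. real_cond_exp Q (coord_sigma B) (indicator (Z \<inter> X)) x
          = real_cond_exp Q (coord_sigma B) (indicator Z) x
            * real_cond_exp Q (coord_sigma B) (indicator X) x" by blast
  moreover have "Z \<inter> X = X \<inter> Z" by blast
  ultimately show "AE x in Q. real_cond_exp Q (coord_sigma B) (indicator (X \<inter> Z)) x
          = real_cond_exp Q (coord_sigma B) (indicator X) x
            * real_cond_exp Q (coord_sigma B) (indicator Z) x" by (simp add: mult.commute)
qed

context mpareto
begin

lemma variogram_sym: "variogram P m i j = variogram P m j i"
proof -
  have "variogram P m j i = prob_space.variance (Q m) (\<lambda>x. - (ln (x$i) - ln (x$j)))"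
    unfolding variogram_def by simp
  also have "\<dots> = variogram P m i j" unfolding variogram_def by (rule var_neg[OF Q_prob])
  finally show ?thesis by simp
qed

lemma key_var:
  assumes VE: "variogram_exists P" and CI: "cond_indep (Q k) A {k} C"
    and i: "i \<in> A" and j: "j \<in> C" and m: "m \<in> A \<union> {k}"
  shows "variogram P m i j = variogram P m i k + variogram P m k j"
proof -
  interpret prob_space "Q m" by (rule Q_prob)
  have pos: "AE x in Q m. 0 < x$l" for l using VE unfolding variogram_exists_def by blast
  have sqi: "integrable (Q m) (\<lambda>x. (ln (x$a) - ln (x$b))\<^sup>2)" for a b
    using VE unfolding variogram_exists_def by blast
  let ?U = "\<lambda>x::real^'d. ln (x$i) - ln (x$k)"
  let ?V = "\<lambda>x::real^'d. ln (x$j) - ln (x$k)"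
  have mU: "?U \<in> borel_measurable (Q m)"
    by (rule measurable_from_subalg[OF subalg U_meas[of i UNIV k]]) simp_all
  have mV: "?V \<in> borel_measurable (Q m)"
    by (rule measurable_from_subalg[OF subalg U_meas[of j UNIV k]]) simp_all
  have iU2: "integrable (Q m) (\<lambda>x. (?U x)\<^sup>2)" by (rule sqi)
  have iV2: "integrable (Q m) (\<lambda>x. (?V x)\<^sup>2)" by (rule sqi)
  have iU: "integrable (Q m) ?U" by (rule square_integrable_imp_integrable[OF mU iU2])
  have iV: "integrable (Q m) ?V" by (rule square_integrable_imp_integrable[OF mV iV2])
  have ae: "AE x in Q m. Vp j k x = ?V x"
    using pos[of j] pos[of k] by eventually_elim (simp add: Vp_def)
  have mVp: "Vp j k \<in> borel_measurable (Q m)"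
    by (rule measurable_from_subalg[OF subalg Vp_meas[of j UNIV k]]) simp_all
  have iVp: "integrable (Q m) (Vp j k)"
    using iV by (rule integrable_cong_AE_imp[OF _ mVp]) (use ae in \<open>auto elim: AE_mp\<close>)
  have kpos: "AE x in Q m. 0 < x$k" by (rule pos)
  have ind: "indep_var borel (Vp j k) borel ?U" by (rule indep_UV[OF CI i j m kpos])
  have e1: "(\<integral>x. Vp j k x * ?U x \<partial>Q m) = (\<integral>x. Vp j k x \<partial>Q m) * (\<integral>x. ?U x \<partial>Q m)"
    by (rule indep_var_lebesgue_integral[OF ind iVp iU])
  have i1: "integrable (Q m) (\<lambda>x. Vp j k x * ?U x)"
    by (rule indep_var_integrable[OF ind iVp iU])
  have ae2: "AE x in Q m. Vp j k x * ?U x = ?U x * ?V x"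
    using ae by eventually_elim simp
  have mUV: "(\<lambda>x. ?U x * ?V x) \<in> borel_measurable (Q m)" using mU mV by simp
  have iUV: "integrable (Q m) (\<lambda>x. ?U x * ?V x)"
    by (rule integrable_cong_AE_imp[OF i1 mUV ae2])
  have "(\<integral>x. ?U x * ?V x \<partial>Q m) = (\<integral>x. Vp j k x * ?U x \<partial>Q m)"
    by (rule integral_cong_AE[OF mUV]) (use mVp mU ae2 in \<open>auto elim: AE_mp\<close>)
  also have "\<dots> = (\<integral>x. ?V x \<partial>Q m) * (\<integral>x. ?U x \<partial>Q m)"
    unfolding e1 by (subst integral_cong_AE[OF mVp mV ae]) simp
  finally have e: "(\<integral>x. ?U x * ?V x \<partial>Q m) = (\<integral>x. ?U x \<partial>Q m) * (\<integral>x. ?V x \<partial>Q m)" by simp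
  have "variogram P m i j = variance (\<lambda>x. ?U x - ?V x)" unfolding variogram_def by simp
  also have "\<dots> = variance ?U + variance ?V" by (rule var_split[OF Q_prob iU iV iU2 iV2 iUV e])
  also have "variance ?V = variance (\<lambda>x. - ?V x)" by (rule var_neg[OF Q_prob, symmetric])
  finally show ?thesis unfolding variogram_def by simp
qed

lemma key_var2:
  assumes VE: "variogram_exists P" and CI: "cond_indep (Q k) A {k} C"
    and i: "i \<in> A" and j: "j \<in> C" and m: "m \<in> A \<union> C \<union> {k}"
  shows "variogram P m i j = variogram P m i k + variogram P m k j"
proof (cases "m \<in> A \<union> {k}")
  case True then show ?thesis by (rule key_var[OF VE CI i j])
next
  case False
  then have m2: "m \<in> C \<union> {k}" using m by blast
  have "variogram P m j i = variogram P m j k + variogram P m k i"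
    by (rule key_var[OF VE cond_indep_sym[OF CI] j i m2])
  moreover have "variogram P m j i = variogram P m i j" by (rule variogram_sym)
  moreover have "variogram P m j k = variogram P m k j" by (rule variogram_sym)
  moreover have "variogram P m k i = variogram P m i k" by (rule variogram_sym)
  ultimately show ?thesis by linarith
qed

end

fun walk :: "('d \<times> 'd) set \<Rightarrow> 'd list \<Rightarrow> bool" where
  "walk E [] = False"
| "walk E [x] = True"
| "walk E (x # y # ys) = ((x, y) \<in> E \<and> walk E (y # ys))"

lemma walk_edges: "xs \<noteq> [] \<Longrightarrow> walk E xs = (\<forall>k. Suc k < length xs \<longrightarrow> (xs!k, xs!Suc k) \<in> E)"
proof (induction E xs rule: walk.induct)
  case (1 E) then show ?case by simp
next
  case (2 E x) then show ?case by simp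
next
  case (3 E x y ys)
  have IH: "walk E (y # ys) = (\<forall>k. Suc k < length (y # ys) \<longrightarrow> ((y # ys)!k, (y # ys)!Suc k) \<in> E)"
    using 3 by simp
  show ?case
  proof
    assume "walk E (x # y # ys)"
    then have e: "(x, y) \<in> E" and w: "\<forall>k. Suc k < length (y # ys) \<longrightarrow> ((y # ys)!k, (y # ys)!Suc k) \<in> E"
      using IH by auto
    show "\<forall>k. Suc k < length (x # y # ys) \<longrightarrow> ((x # y # ys)!k, (x # y # ys)!Suc k) \<in> E"
    proof (intro allI impI)
      fix k assume k: "Suc k < length (x # y # ys)"
      show "((x # y # ys)!k, (x # y # ys)!Suc k) \<in> E"
      proof (cases k)
        case 0 then show ?thesis using e by simp
      next
        case (Suc k') then show ?thesis using w k by simp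
      qed
    qed
  next
    assume a: "\<forall>k. Suc k < length (x # y # ys) \<longrightarrow> ((x # y # ys)!k, (x # y # ys)!Suc k) \<in> E"
    have e: "(x, y) \<in> E" using a[rule_format, of 0] by simp
    have "\<forall>k. Suc k < length (y # ys) \<longrightarrow> ((y # ys)!k, (y # ys)!Suc k) \<in> E"
    proof (intro allI impI)
      fix k assume "Suc k < length (y # ys)"
      then show "((y # ys)!k, (y # ys)!Suc k) \<in> E" using a[rule_format, of "Suc k"] by simp
    qed
    then show "walk E (x # y # ys)" using e IH by simp
  qed
qed

lemma path_iff: "is_path E xs = (walk E xs \<and> distinct xs)"
  unfolding is_path_def using walk_edges[of xs E] by (cases xs) auto

lemma walk_append: "xs \<noteq> [] \<Longrightarrow> ys \<noteq> [] \<Longrightarrow> walk E (xs @ ys) = (walk E xs \<and> walk E ys \<and> (last xs, hd ys) \<in> E)"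
proof (induction xs)
  case Nil then show ?case by simp
next
  case (Cons x xs)
  show ?case
  proof (cases xs)
    case Nil
    then show ?thesis using Cons(3) by (cases ys) auto
  next
    case (Cons z zs)
    then show ?thesis using Cons.IH Cons.prems by auto
  qed
qed

lemma walk_Cons: "walk E (x # xs) = (xs = [] \<or> ((x, hd xs) \<in> E \<and> walk E xs))"
  by (cases xs) auto

lemma walk_rev: "sym E \<Longrightarrow> walk E xs \<Longrightarrow> walk E (rev xs)"
proof (induction xs)
  case Nil then show ?case by simp
next
  case (Cons x xs)
  show ?case
  proof (cases "xs = []")
    case True then show ?thesis by simp
  next
    case False
    then have e: "(x, hd xs) \<in> E" and w: "walk E xs" using Cons(3) walk_Cons[of E x xs] by auto
    have "(hd xs, x) \<in> E" using e Cons(2) unfolding sym_def by blast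
    then show ?thesis using Cons(1)[OF Cons(2) w] False walk_append[of "rev xs" "[x]" E]
      by (simp add: last_rev)
  qed
qed

lemma walk_to_path: "walk E ws \<Longrightarrow> \<exists>zs. is_path E zs \<and> hd zs = hd ws \<and> last zs = last ws \<and> set zs \<subseteq> set ws"
proof (induction "length ws" arbitrary: ws rule: less_induct)
  case less
  show ?case
  proof (cases "distinct ws")
    case True then show ?thesis using less(2) path_iff by blast
  next
    case False
    then obtain xs y ys zs where ws: "ws = xs @ [y] @ ys @ [y] @ zs"
      using not_distinct_decomp by blast
    define ws' where "ws' = xs @ [y] @ zs"
    have w1: "walk E (xs @ [y])" and w2: "walk E ([y] @ zs)"
    proof -
      have "walk E ((xs @ [y] @ ys) @ ([y] @ zs))" using less(2) ws by simp
      then have a: "walk E (xs @ [y] @ ys)" "walk E ([y] @ zs)" using walk_append[of "xs @ [y] @ ys" "[y] @ zs" E] by auto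
      from a(1) have "walk E ((xs @ [y]) @ ys)" by simp
      then show "walk E (xs @ [y])"
        by (cases "ys = []") (use walk_append[of "xs @ [y]" ys E] in auto)
      show "walk E ([y] @ zs)" by (rule a(2))
    qed
    have w': "walk E ws'"
    proof (cases "zs = []")
      case True then show ?thesis using w1 unfolding ws'_def by simp
    next
      case False
      have "walk E ((xs @ [y]) @ zs)"
        using walk_append[of "xs @ [y]" zs E] w1 w2 False walk_Cons[of E y zs] by auto
      then show ?thesis unfolding ws'_def by simp
    qed
    have len: "length ws' < length ws" unfolding ws'_def ws by simp
    obtain p where p: "is_path E p" "hd p = hd ws'" "last p = last ws'" "set p \<subseteq> set ws'"
      using less(1)[OF len w'] by blast
    have "hd ws' = hd ws" unfolding ws'_def ws by (cases xs) auto
    moreover have "last ws' = last ws" unfolding ws'_def ws by (cases zs) auto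
    moreover have "set ws' \<subseteq> set ws" unfolding ws'_def ws by auto
    ultimately have "is_path E p \<and> hd p = hd ws \<and> last p = last ws \<and> set p \<subseteq> set ws" using p by auto
    then show ?thesis by (intro exI[of _ p])
  qed
qed

lemma distinct_hd_last: "distinct ys \<Longrightarrow> ys \<noteq> [] \<Longrightarrow> hd ys = last ys \<Longrightarrow> ys = [hd ys]"
proof (cases ys)
  case (Cons y yt)
  assume d: "distinct ys" and e: "hd ys = last ys"
  show ?thesis
  proof (cases "yt = []")
    case True then show ?thesis using Cons by simp
  next
    case False
    then have "last ys \<in> set yt" using Cons by simp
    then show ?thesis using d e Cons by auto
  qed
qed simp

lemma cyc:
  assumes sE: "sym E" and a: "a \<notin> set xt" "a \<notin> set yt" and px: "is_path E xt" and py: "is_path E yt"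
    and ex: "(a, hd xt) \<in> E" and ey: "(a, hd yt) \<in> E" and ne: "hd xt \<noteq> hd yt" and l: "last xt = last yt"
  shows "\<exists>cy. is_cycle E cy"
proof -
  have wx: "walk E xt" "distinct xt" and wy: "walk E yt" "distinct yt" using px py path_iff[of E xt] path_iff[of E yt] by auto
  have xt0: "xt \<noteq> []" and yt0: "yt \<noteq> []" using wx(1) wy(1) by auto
  define p where "p = takeWhile (\<lambda>v. v \<notin> set yt) xt"
  define r where "r = dropWhile (\<lambda>v. v \<notin> set yt) xt"
  have xpr: "xt = p @ r" unfolding p_def r_def by simp
  have r0: "r \<noteq> []"
  proof
    assume "r = []"
    then have "\<forall>v\<in>set xt. v \<notin> set yt" unfolding r_def by (simp add: dropWhile_eq_Nil_conv)
    moreover have "last xt \<in> set xt" "last yt \<in> set yt" using xt0 yt0 by auto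
    ultimately show False using l by simp
  qed
  define c where "c = hd r"
  have cy: "c \<in> set yt" unfolding c_def r_def using r0 hd_dropWhile[of "\<lambda>v. v \<notin> set yt" xt] r_def by auto
  have pdisj: "\<forall>v\<in>set p. v \<notin> set yt" unfolding p_def by (auto dest: set_takeWhileD)
  obtain r' where rr: "r = c # r'" using r0 unfolding c_def by (cases r) auto
  have xt2: "xt = (p @ [c]) @ r'" using xpr rr by simp
  obtain q r2 where yt2: "yt = q @ c # r2" using split_list[OF cy] by blast
  have wpc: "walk E (p @ [c])"
  proof (cases "r' = []")
    case True then show ?thesis using wx(1) xt2 by simp
  next
    case False then show ?thesis using wx(1) xt2 walk_append[of "p @ [c]" r' E] by simp
  qed
  have hpc: "hd (p @ [c]) = hd xt" using xt2 by (cases p) auto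
  have w1: "walk E (a # p @ [c])" using wpc hpc ex walk_Cons[of E a "p @ [c]"] by simp
  have dxt: "distinct (p @ [c])" using wx(2) xt2 by simp
  have cp: "c \<notin> set p" using pdisj cy by blast
  have aset: "a \<noteq> c" using a(2) cy by blast
  have ap: "a \<notin> set p" using a(1) xpr by auto
  have aq: "a \<notin> set q" using a(2) yt2 by auto
  have dq: "distinct q" "c \<notin> set q" using wy(2) yt2 by auto
  have pq: "set p \<inter> set q = {}" using pdisj yt2 by auto
  show ?thesis
  proof (cases "q = []")
    case True
    then have chy: "c = hd yt" using yt2 by simp
    have p0: "p \<noteq> []" using True chy hpc ne by auto
    define cyl where "cyl = a # p @ [c]"
    have "is_path E cyl" unfolding cyl_def path_iff using w1 dxt cp ap aset by auto
    moreover have "3 \<le> length cyl" unfolding cyl_def using p0 by (cases p) auto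
    moreover have "(last cyl, hd cyl) \<in> E" unfolding cyl_def using chy ey sE unfolding sym_def by auto
    ultimately show ?thesis unfolding is_cycle_def by blast
  next
    case False
    have wq: "walk E q" and eqc: "(last q, c) \<in> E"
      using wy(1) yt2 walk_append[of q "c # r2" E] False by auto
    have wrq: "walk E (rev q)" by (rule walk_rev[OF sE wq])
    have ecq: "(c, last q) \<in> E" using eqc sE unfolding sym_def by blast
    define cyl where "cyl = (a # p @ [c]) @ rev q"
    have wc: "walk E cyl" unfolding cyl_def using walk_append[of "a # p @ [c]" "rev q" E] w1 wrq ecq False
      by (simp add: hd_rev)
    have "distinct cyl" unfolding cyl_def using dxt cp ap aset aq dq pq by auto
    then have "is_path E cyl" using wc path_iff by blast
    moreover have "3 \<le> length cyl" unfolding cyl_def using False by (cases q) auto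
    moreover have "(last cyl, hd cyl) \<in> E"
    proof -
      have "last cyl = hd q" unfolding cyl_def using False by (simp add: last_rev)
      also have "\<dots> = hd yt" using yt2 False by simp
      finally show ?thesis unfolding cyl_def using ey sE unfolding sym_def by auto
    qed
    ultimately show ?thesis unfolding is_cycle_def by blast
  qed
qed

lemma path_unique:
  assumes T: "is_tree E" and px: "is_path E xs" and py: "is_path E ys"
    and h: "hd xs = hd ys" and l: "last xs = last ys"
  shows "xs = ys"
  using px py h l
proof (induction xs arbitrary: ys)
  case Nil then show ?case unfolding is_path_def by simp
next
  case (Cons a xt)
  have sE: "sym E" and nc: "\<nexists>cy. is_cycle E cy" using T unfolding is_tree_def by auto
  have wx: "walk E (a # xt)" "distinct (a # xt)" using Cons(2) path_iff[of E "a # xt"] by auto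
  have wy: "walk E ys" "distinct ys" using Cons(3) path_iff[of E ys] by auto
  have ys0: "ys \<noteq> []" using wy(1) by auto
  show ?case
  proof (cases "xt = []")
    case True
    then have "hd ys = last ys" using Cons(4) Cons(5) by simp
    then have "ys = [hd ys]" using distinct_hd_last[OF wy(2) ys0] by simp
    then show ?thesis using True Cons(4) by simp
  next
    case False
    obtain yt where ys: "ys = a # yt" using ys0 Cons(4) by (cases ys) auto
    have yt0: "yt \<noteq> []"
    proof
      assume "yt = []"
      then have "hd (a # xt) = last (a # xt)" using Cons(5) ys by simp
      then have "a # xt = [a]" using distinct_hd_last[OF wx(2)] by simp
      then show False using False by simp
    qed
    have px': "is_path E xt" using wx walk_Cons[of E a xt] False path_iff[of E xt] by auto
    have py': "is_path E yt" using wy ys walk_Cons[of E a yt] yt0 path_iff[of E yt] by auto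
    have ex: "(a, hd xt) \<in> E" using wx(1) walk_Cons[of E a xt] False by simp
    have ey: "(a, hd yt) \<in> E" using wy(1) ys walk_Cons[of E a yt] yt0 by simp
    have lt: "last xt = last yt" using Cons(5) ys False yt0 by simp
    show ?thesis
    proof (cases "hd xt = hd yt")
      case True
      then have "xt = yt" using Cons.IH[OF px' py' True lt] by simp
      then show ?thesis using ys by simp
    next
      case False
      have "\<exists>cy. is_cycle E cy"
        by (rule cyc[OF sE _ _ px' py' ex ey False lt]) (use wx(2) wy(2) ys in auto)
      then show ?thesis using nc by blast
    qed
  qed
qed

lemma ph_eq: "is_tree E \<Longrightarrow> is_path E xs \<Longrightarrow> ph E (hd xs) (last xs) = path_edges xs"
  unfolding ph_def
  by (rule arg_cong[of _ _ path_edges], rule the_equality) (auto intro: path_unique[symmetric])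

lemma pe_single: "path_edges [v] = {}" unfolding path_edges_def by simp

lemma pe_snoc: "ys \<noteq> [] \<Longrightarrow> path_edges (ys @ [j]) = insert (last ys, j) (path_edges ys)"
proof (intro set_eqI iffI)
  fix e assume ys: "ys \<noteq> []" and "e \<in> path_edges (ys @ [j])"
  then obtain k where k: "e = ((ys @ [j])!k, (ys @ [j])!Suc k)" "Suc k < length ys + 1"
    unfolding path_edges_def by auto
  show "e \<in> insert (last ys, j) (path_edges ys)"
  proof (cases "Suc k < length ys")
    case True
    then have "e = (ys!k, ys!Suc k)" using k by (simp add: nth_append)
    then show ?thesis using True unfolding path_edges_def by blast
  next
    case False
    then have kk: "k = length ys - 1" "Suc k = length ys" using k(2) by auto
    then have "e = (ys!(length ys - 1), j)" using k(1) by (simp add: nth_append)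
    then show ?thesis using ys by (simp add: last_conv_nth)
  qed
next
  fix e assume ys: "ys \<noteq> []" and "e \<in> insert (last ys, j) (path_edges ys)"
  then consider "e = (last ys, j)" | "e \<in> path_edges ys" by blast
  then show "e \<in> path_edges (ys @ [j])"
  proof cases
    case 1
    define k where "k = length ys - 1"
    have "Suc k = length ys" unfolding k_def using ys by simp
    then have "e = ((ys @ [j])!k, (ys @ [j])!Suc k)" "Suc k < length (ys @ [j])"
      using 1 ys by (simp_all add: nth_append last_conv_nth k_def)
    then show ?thesis unfolding path_edges_def by blast
  next
    case 2
    then obtain k where k: "e = (ys!k, ys!Suc k)" "Suc k < length ys"
      unfolding path_edges_def by auto
    then have "e = ((ys @ [j])!k, (ys @ [j])!Suc k)" "Suc k < length (ys @ [j])"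
      by (simp_all add: nth_append)
    then show ?thesis unfolding path_edges_def by blast
  qed
qed

lemma pe_sub: "path_edges ys \<subseteq> set ys \<times> set ys"
  unfolding path_edges_def by auto

lemma path_snocD:
  assumes "is_path E (ys @ [j])" "ys \<noteq> []"
  shows "is_path E ys" "j \<notin> set ys" "(last ys, j) \<in> E"
proof -
  have w: "walk E (ys @ [j])" "distinct (ys @ [j])" using assms(1) path_iff[of E "ys @ [j]"] by auto
  have "walk E ys" "(last ys, j) \<in> E" using w(1) walk_append[of ys "[j]" E] assms(2) by auto
  then show "is_path E ys" "(last ys, j) \<in> E" using w(2) path_iff[of E ys] by auto
  show "j \<notin> set ys" using w(2) by simp
qed

definition reachA :: "('d \<times> 'd) set \<Rightarrow> 'd \<Rightarrow> 'd \<Rightarrow> 'd set" where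
  "reachA E i k = {v. \<exists>ws. walk E ws \<and> hd ws = i \<and> last ws = v \<and> k \<notin> set ws}"

lemma sep:
  assumes T: "is_tree E" and p: "is_path E (ys @ [j])" and l: "2 \<le> length ys"
  defines "A \<equiv> reachA E (hd ys) (last ys)"
  defines "C \<equiv> UNIV - A - {last ys}"
  shows "hd ys \<in> A" "j \<in> C" "A \<inter> {last ys} = {}" "A \<inter> C = {}" "{last ys} \<inter> C = {}"
    "separates E A {last ys} C"
proof -
  let ?i = "hd ys" and ?k = "last ys"
  have ys0: "ys \<noteq> []" using l by auto
  have py: "is_path E ys" and jy: "j \<notin> set ys" using path_snocD[OF p ys0] by auto
  have dys: "distinct ys" using py path_iff[of E ys] by auto
  have ik: "?i \<noteq> ?k"
  proof
    assume "?i = ?k"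
    then have "ys = [hd ys]" using distinct_hd_last[OF dys ys0] by simp
    then show False using l by (metis One_nat_def length_Cons list.size(3) numeral_le_one_iff semiring_norm(69))
  qed
  show iA: "?i \<in> A" unfolding A_def reachA_def using ik by (intro CollectI exI[of _ "[?i]"]) simp
  show kA: "A \<inter> {?k} = {}"
  proof -
    have "?k \<notin> A"
    proof
      assume "?k \<in> A"
      then obtain ws where ws: "walk E ws" "last ws = ?k" "?k \<notin> set ws"
        unfolding A_def reachA_def by blast
      then have "ws \<noteq> []" by auto
      then have "last ws \<in> set ws" by simp
      then show False using ws by simp
    qed
    then show ?thesis by simp
  qed
  have jA: "j \<notin> A"
  proof
    assume "j \<in> A"
    then obtain ws where ws: "walk E ws" "hd ws = ?i" "last ws = j" "?k \<notin> set ws"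
      unfolding A_def reachA_def by blast
    obtain zs where zs: "is_path E zs" "hd zs = hd ws" "last zs = last ws" "set zs \<subseteq> set ws"
      using walk_to_path[OF ws(1)] by blast
    have "zs = ys @ [j]" by (rule path_unique[OF T zs(1) p]) (use zs ws ys0 in simp_all)
    then have "?k \<in> set zs" using ys0 by simp
    then show False using zs(4) ws(4) by blast
  qed
  have jk: "j \<noteq> ?k" using jy ys0 by auto
  show "j \<in> C" unfolding C_def using jA jk by simp
  show "A \<inter> C = {}" "{?k} \<inter> C = {}" unfolding C_def by auto
  show "separates E A {?k} C"
    unfolding separates_def
  proof (intro ballI allI impI)
    fix a c zs assume a: "a \<in> A" and c: "c \<in> C" and z: "is_path E zs \<and> hd zs = a \<and> last zs = c"
    show "set zs \<inter> {?k} \<noteq> {}"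
    proof
      assume nk: "set zs \<inter> {?k} = {}"
      obtain ws where ws: "walk E ws" "hd ws = ?i" "last ws = a" "?k \<notin> set ws"
        using a unfolding A_def reachA_def by blast
      have wz: "walk E zs" using z path_iff[of E zs] by auto
      obtain zt where zt: "zs = a # zt" using z wz by (cases zs) auto
      show False
      proof (cases "zt = []")
        case True
        then have "c = a" using z zt by simp
        then show False using a c unfolding C_def by simp
      next
        case False
        have e: "(a, hd zt) \<in> E" and wzt: "walk E zt" using wz zt walk_Cons[of E a zt] False by auto
        have ws0: "ws \<noteq> []" using ws(1) by auto
        have "walk E (ws @ zt)" using walk_append[OF ws0 False, of E] ws e wzt by simp
        moreover have "hd (ws @ zt) = ?i" using ws ws0 by simp
        moreover have "last (ws @ zt) = c" using z zt False by simp
        moreover have "?k \<notin> set (ws @ zt)" using ws(4) nk zt by auto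
        ultimately have "c \<in> A" unfolding A_def reachA_def by blast
        then show False using c unfolding C_def by simp
      qed
    qed
  qed
qed

context mpareto
begin

lemma main_path:
  assumes T: "is_tree E" and EG: "extremal_graphical P E" and VE: "variogram_exists P"
  shows "is_path E xs \<Longrightarrow> variogram P m (hd xs) (last xs) = (\<Sum>(s,t)\<in>path_edges xs. variogram P m s t)"
proof (induction xs rule: rev_induct)
  case Nil then show ?case unfolding is_path_def by simp
next
  case (snoc j ys)
  show ?case
  proof (cases "ys = []")
    case True
    then show ?thesis by (simp add: pe_single variogram_def)
  next
    case False
    have py: "is_path E ys" and jy: "j \<notin> set ys" using path_snocD[OF snoc(2) False] by auto
    have IH: "variogram P m (hd ys) (last ys) = (\<Sum>(s,t)\<in>path_edges ys. variogram P m s t)"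
      by (rule snoc.IH[OF py])
    have nin: "(last ys, j) \<notin> path_edges ys" using pe_sub[of ys] jy by blast
    have fin: "finite (path_edges ys)" by simp
    have sum: "(\<Sum>(s,t)\<in>path_edges (ys @ [j]). variogram P m s t) = variogram P m (last ys) j + (\<Sum>(s,t)\<in>path_edges ys. variogram P m s t)"
      unfolding pe_snoc[OF False] using sum.insert[OF fin nin, of "\<lambda>(s,t). variogram P m s t"] by simp
    have hl: "hd (ys @ [j]) = hd ys" "last (ys @ [j]) = j" using False by auto
    show ?thesis
    proof (cases "length ys = 1")
      case True
      then obtain i where "ys = [i]" by (cases ys) auto
      then show ?thesis using sum hl by (simp add: pe_single)
    next
      case False2: False
      have "length ys \<noteq> 0" using False by simp
      then have l2: "2 \<le> length ys" using False2 by linarith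
      let ?A = "reachA E (hd ys) (last ys)"
      let ?C = "UNIV - ?A - {last ys}"
      note S = sep[OF T snoc(2) l2]
      have "extremal_cond_indep P ?A {last ys} ?C"
        using EG S unfolding extremal_graphical_def by blast
      then have CI: "cond_indep (Q (last ys)) ?A {last ys} ?C"
        unfolding extremal_cond_indep_def by blast
      have "variogram P m (hd ys) j = variogram P m (hd ys) (last ys) + variogram P m (last ys) j"
        by (rule key_var2[OF VE CI S(1) S(2)]) blast
      then show ?thesis using sum hl IH by simp
    qed
  qed
qed

end

theorem proposition4:
  fixes P :: "(real^'d::finite) measure" and E :: "('d \<times> 'd) set"
  assumes "multivariate_pareto P"
    and "is_tree E"
    and "extremal_graphical P E"
    and "variogram_exists P"
  shows "\<forall>m i j. variogram P m i j = (\<Sum>(s,t)\<in>ph E i j. variogram P m s t)"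
proof (intro allI)
  interpret mpareto P by (rule mpareto.intro[OF assms(1)])
  fix m i j
  obtain xs where xs: "is_path E xs" "hd xs = i" "last xs = j"
    using assms(2) unfolding is_tree_def by blast
  have "ph E i j = path_edges xs" using ph_eq[OF assms(2) xs(1)] xs by simp
  then show "variogram P m i j = (\<Sum>(s,t)\<in>ph E i j. variogram P m s t)"
    using main_path[OF assms(2) assms(3) assms(4) xs(1), of m] xs by simp
qed

end
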